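(* Let $k\ge4$ and $x\in(1/4,1/2)$. In the one-shot $k$-candidate positioning game with uniform voters on $[0,1]$, left–right tie-breaking, and each candidate's payoff equal to its probability of being the plurality winner, the mixed strategy in which each candidate independently chooses $x$ or $1-x$ with probability $1/2$ each is a symmetric mixed-strategy Nash equilibrium: if all other $k-1$ candidates use this strategy, no (possibly mixed) strategy of the remaining candidate yields a higher win probability.
   Context: Voters form a continuum uniformly distributed on $[0,1]$, each voting for the nearest occupied point. The vote share allocated to an occupied point is the measure of voters whose nearest occupied point it is; it splits into a left part (voters to its left) and a right part (voters to its right). Left–right tie-breaking: if several candidates occupy the same point, one of them chosen uniformly at random receives the entire left part of that point's vote share and a different one chosen uniformly at random receives the entire right part; the others receive nothing. (A single candidate at a point receives both parts.) The plurality winner is the candidate with the largest vote share, ties broken uniformly at random. Each of the $k$ candidates chooses a position in $[0,1]$ (possibly at random). *)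

theory Defs
  imports "HOL-Probability.Probability"
begin

text \<open>Candidates are indexed by 0..k-1; a (pure) profile is p :: nat => real,
  p j being the position of candidate j in [0,1].\<close>

definition occupied :: "nat \<Rightarrow> (nat \<Rightarrow> real) \<Rightarrow> real set" where
  "occupied k p = p ` {..<k}"

text \<open>Left part of the vote share of the occupied point a: voters to the left of a
  whose nearest occupied point is a.\<close>
definition left_part :: "nat \<Rightarrow> (nat \<Rightarrow> real) \<Rightarrow> real \<Rightarrow> real" where
  "left_part k p a =
     (let B = {b \<in> occupied k p. b < a} in if B = {} then a else (a - Max B) / 2)"

definition right_part :: "nat \<Rightarrow> (nat \<Rightarrow> real) \<Rightarrow> real \<Rightarrow> real" where
  "right_part k p a =
     (let B = {b \<in> occupied k p. a < b} in if B = {} then 1 - a else (Min B - a) / 2)"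

text \<open>Left-right tie-breaking: at each occupied point a, a pair (l, r) of candidates at a
  is drawn uniformly: l receives the left part, r the right part; l and r are distinct
  whenever at least two candidates occupy a (and l = r if a single candidate is there).\<close>
definition tb_pairs :: "nat \<Rightarrow> (nat \<Rightarrow> real) \<Rightarrow> real \<Rightarrow> (nat \<times> nat) set" where
  "tb_pairs k p a =
     (let C = {j. j < k \<and> p j = a} in
      if card C = 1 then {(l, r). l \<in> C \<and> r \<in> C}
      else {(l, r). l \<in> C \<and> r \<in> C \<and> l \<noteq> r})"

definition assignments :: "nat \<Rightarrow> (nat \<Rightarrow> real) \<Rightarrow> (real \<Rightarrow> nat \<times> nat) set" where
  "assignments k p = PiE (occupied k p) (tb_pairs k p)"

definition vote_share ::
  "nat \<Rightarrow> (nat \<Rightarrow> real) \<Rightarrow> (real \<Rightarrow> nat \<times> nat) \<Rightarrow> nat \<Rightarrow> real" where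
  "vote_share k p T j =
     (\<Sum>a\<in>occupied k p. (if fst (T a) = j then left_part k p a else 0)
                        + (if snd (T a) = j then right_part k p a else 0))"

definition plurality_winners ::
  "nat \<Rightarrow> (nat \<Rightarrow> real) \<Rightarrow> (real \<Rightarrow> nat \<times> nat) \<Rightarrow> nat set" where
  "plurality_winners k p T =
     {j. j < k \<and> (\<forall>m<k. vote_share k p T m \<le> vote_share k p T j)}"

definition win_prob :: "nat \<Rightarrow> (nat \<Rightarrow> real) \<Rightarrow> nat \<Rightarrow> real" where
  "win_prob k p i =
     (\<Sum>T\<in>assignments k p.
        (if i \<in> plurality_winners k p T then 1 / real (card (plurality_winners k p T)) else 0))
     / real (card (assignments k p))"

text \<open>Expected win probability of candidate i located at y when every other candidate
  independently chooses x or 1-x with probability 1/2 each (uniform over the 2^(k-1)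
  profiles, since x \<noteq> 1-x in the relevant range).\<close>
definition others_profiles :: "nat \<Rightarrow> real \<Rightarrow> nat \<Rightarrow> real \<Rightarrow> (nat \<Rightarrow> real) set" where
  "others_profiles k x i y = PiE {..<k} (\<lambda>j. if j = i then {y} else {x, 1 - x})"

definition dev_payoff :: "nat \<Rightarrow> real \<Rightarrow> nat \<Rightarrow> real \<Rightarrow> real" where
  "dev_payoff k x i y =
     (\<Sum>q\<in>others_profiles k x i y. win_prob k q i) / real (card (others_profiles k x i y))"

end

theory Submission
  imports Defs
begin


lemma tb_sub: "tb_pairs k q a \<subseteq> {j. j<k \<and> q j = a} \<times> {j. j<k \<and> q j = a}"
  unfolding tb_pairs_def Let_def by auto

lemma finite_tb: "finite (tb_pairs k q a)"
  by (rule finite_subset[OF tb_sub]) auto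

lemma tb_nonempty: assumes "a \<in> occupied k q" shows "tb_pairs k q a \<noteq> {}"
proof -
  define C where "C = {j. j<k \<and> q j = a}"
  have fin: "finite C" unfolding C_def by auto
  have ne: "C \<noteq> {}" using assms unfolding C_def occupied_def by auto
  show ?thesis
  proof (cases "card C = 1")
    case True
    then obtain c where "C = {c}" using card_1_singletonE by blast
    then show ?thesis unfolding tb_pairs_def Let_def C_def[symmetric] using True by auto
  next
    case False
    have "card C > 0" using ne fin by (simp add: card_gt_0_iff)
    then have c2: "card C \<ge> 2" using False by linarith
    obtain l where l: "l \<in> C" using ne by auto
    have "card (C - {l}) \<ge> 1" using c2 l fin by simp
    then obtain r where "r \<in> C - {l}"
      by (metis One_nat_def card.empty ex_in_conv not_one_le_zero)
    then have "l \<in> C" "r \<in> C" "l \<noteq> r" using l by auto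
    then show ?thesis unfolding tb_pairs_def Let_def C_def[symmetric] using False by auto
  qed
qed

lemma finite_occ: "finite (occupied k q)" unfolding occupied_def by auto

lemma finite_assign: "finite (assignments k q)"
  unfolding assignments_def by (intro finite_PiE finite_occ finite_tb)

lemma assign_ne: "assignments k q \<noteq> {}"
  unfolding assignments_def using tb_nonempty by (simp add: PiE_eq_empty_iff)

lemma card_assign_pos: "card (assignments k q) > 0"
  using finite_assign assign_ne by (simp add: card_gt_0_iff)

lemma finite_pw: "finite (plurality_winners k q T)"
  unfolding plurality_winners_def by auto

lemma win_prob_nonneg: "win_prob k q i \<ge> 0"
  unfolding win_prob_def by (intro divide_nonneg_nonneg sum_nonneg) auto

lemma win_prob_le1: "win_prob k q i \<le> 1"
proof -
  have "(\<Sum>T\<in>assignments k q.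
        (if i \<in> plurality_winners k q T then 1 / real (card (plurality_winners k q T)) else 0))
     \<le> (\<Sum>T\<in>assignments k q. 1)"
  proof (rule sum_mono)
    fix T assume "T \<in> assignments k q"
    show "(if i \<in> plurality_winners k q T then 1 / real (card (plurality_winners k q T)) else 0) \<le> 1"
    proof (cases "i \<in> plurality_winners k q T")
      case True
      then have "card (plurality_winners k q T) \<ge> 1" using finite_pw
        by (metis One_nat_def Suc_leI card_gt_0_iff empty_iff)
      then show ?thesis using True by simp
    qed simp
  qed
  then show ?thesis unfolding win_prob_def using card_assign_pos
    by (simp add: divide_le_eq)
qed

lemma win_prob_zero:
  assumes "\<And>T. T \<in> assignments k q \<Longrightarrow> i \<notin> plurality_winners k q T"
  shows "win_prob k q i = 0"
  unfolding win_prob_def using assms by simp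

lemma win_prob_filter:
  assumes "\<And>T. T \<in> assignments k q \<Longrightarrow> i \<in> plurality_winners k q T \<Longrightarrow> card (plurality_winners k q T) = c"
  shows "win_prob k q i = real (card {T\<in>assignments k q. i \<in> plurality_winners k q T}) / (real c * real (card (assignments k q)))"
proof -
  have "(\<Sum>T\<in>assignments k q.
        (if i \<in> plurality_winners k q T then 1 / real (card (plurality_winners k q T)) else 0))
      = (\<Sum>T\<in>assignments k q. (if i \<in> plurality_winners k q T then 1 / real c else 0))"
    using assms by (intro sum.cong) auto
  also have "\<dots> = (\<Sum>T\<in>{T\<in>assignments k q. i \<in> plurality_winners k q T}. 1 / real c)"
    using finite_assign by (rule sum.inter_filter[symmetric])
  also have "\<dots> = real (card {T\<in>assignments k q. i \<in> plurality_winners k q T}) / real c" by simp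
  finally show ?thesis unfolding win_prob_def by simp
qed

lemma card_PiE_filter:
  assumes "finite S" "x0 \<in> S"
  shows "card {T \<in> PiE S F. P (T x0)} = card {p \<in> F x0. P p} * (\<Prod>a\<in>S-{x0}. card (F a))"
proof -
  have "{T \<in> PiE S F. P (T x0)} = PiE S (F(x0 := {p \<in> F x0. P p}))"
    using assms(2) by (auto simp: PiE_iff extensional_def split: if_splits)
  then have "card {T \<in> PiE S F. P (T x0)} = (\<Prod>a\<in>S. card ((F(x0 := {p \<in> F x0. P p})) a))"
    using assms by (simp add: card_PiE)
  also have "\<dots> = card {p \<in> F x0. P p} * (\<Prod>a\<in>S-{x0}. card (F a))"
    using assms by (simp add: prod.remove)
  finally show ?thesis .
qed

lemma card_PiE_split:
  assumes "finite S" "x0 \<in> S"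
  shows "card (PiE S F) = card (F x0) * (\<Prod>a\<in>S-{x0}. card (F a))"
  using assms by (simp add: card_PiE prod.remove)



lemma occ_refl: "occupied k (\<lambda>j. 1 - q j) = (\<lambda>a. 1 - a) ` occupied k q"
  unfolding occupied_def by (simp add: image_image)

lemma Max_refl:
  assumes "finite B" "B \<noteq> {}"
  shows "Max ((\<lambda>a. 1 - a) ` B) = 1 - Min (B::real set)"
  using assms by (intro Max_eqI) (auto intro: rev_image_eqI[OF Min_in])

lemma Min_refl:
  assumes "finite B" "B \<noteq> {}"
  shows "Min ((\<lambda>a. 1 - a) ` B) = 1 - Max (B::real set)"
  using assms by (intro Min_eqI) (auto intro: rev_image_eqI[OF Max_in])

lemma left_refl: "left_part k (\<lambda>j. 1 - q j) (1 - a) = right_part k q a"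
proof -
  define B where "B = {b \<in> occupied k q. a < b}"
  have B': "{b \<in> occupied k (\<lambda>j. 1 - q j). b < 1 - a} = (\<lambda>a. 1 - a) ` B"
    unfolding B_def occ_refl by auto
  have fB: "finite B" unfolding B_def using finite_occ by auto
  show ?thesis unfolding left_part_def right_part_def Let_def B' B_def[symmetric]
    using Max_refl[OF fB] by auto
qed

lemma right_refl: "right_part k (\<lambda>j. 1 - q j) (1 - a) = left_part k q a"
proof -
  define B where "B = {b \<in> occupied k q. b < a}"
  have B': "{b \<in> occupied k (\<lambda>j. 1 - q j). 1 - a < b} = (\<lambda>a. 1 - a) ` B"
    unfolding B_def occ_refl by auto
  have fB: "finite B" unfolding B_def using finite_occ by auto
  show ?thesis unfolding left_part_def right_part_def Let_def B' B_def[symmetric]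
    using Min_refl[OF fB] by auto
qed

lemma sw: "prod.swap ` {(l,r). P l r} = {(l,r). P r l}"
  by (auto simp: image_def)

lemma tb_refl: "tb_pairs k (\<lambda>j. 1 - q j) (1 - a) = prod.swap ` tb_pairs k q a"
proof -
  have C: "{j. j < k \<and> 1 - q j = 1 - a} = {j. j<k \<and> q j = a}" by auto
  show ?thesis unfolding tb_pairs_def Let_def C
    apply (simp only: if_distrib[where f="image prod.swap"] sw)
    apply auto done
qed

definition Phi :: "nat \<Rightarrow> (nat \<Rightarrow> real) \<Rightarrow> (real \<Rightarrow> nat \<times> nat) \<Rightarrow> (real \<Rightarrow> nat \<times> nat)" where
  "Phi k q T = (\<lambda>b. if b \<in> occupied k (\<lambda>j. 1 - q j) then prod.swap (T (1 - b)) else undefined)"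

lemma Phi_inj: "inj_on (Phi k q) (assignments k q)"
proof (rule inj_onI)
  fix T1 T2 assume T: "T1 \<in> assignments k q" "T2 \<in> assignments k q" "Phi k q T1 = Phi k q T2"
  show "T1 = T2"
  proof
    fix a
    show "T1 a = T2 a"
    proof (cases "a \<in> occupied k q")
      case True
      then have "1 - a \<in> occupied k (\<lambda>j. 1 - q j)" unfolding occ_refl by auto
      then have "prod.swap (T1 a) = prod.swap (T2 a)"
        using fun_cong[OF T(3), of "1 - a"] unfolding Phi_def by simp
      then show ?thesis by (metis swap_swap)
    next
      case False
      then show ?thesis using T(1,2) unfolding assignments_def by (metis PiE_arb)
    qed
  qed
qed

lemma Phi_image: "Phi k q ` assignments k q = assignments k (\<lambda>j. 1 - q j)"
proof
  show "Phi k q ` assignments k q \<subseteq> assignments k (\<lambda>j. 1 - q j)"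
  proof
    fix T' assume "T' \<in> Phi k q ` assignments k q"
    then obtain T where T: "T \<in> assignments k q" "T' = Phi k q T" by auto
    show "T' \<in> assignments k (\<lambda>j. 1 - q j)"
      unfolding assignments_def
    proof (rule PiE_I)
      fix b assume b: "b \<in> occupied k (\<lambda>j. 1 - q j)"
      then have "1 - b \<in> occupied k q" unfolding occ_refl by auto
      then have "T (1 - b) \<in> tb_pairs k q (1 - b)" using T(1) unfolding assignments_def by auto
      then show "T' b \<in> tb_pairs k (\<lambda>j. 1 - q j) b"
        using tb_refl[of k q "1 - b"] b T(2) unfolding Phi_def by simp
    next
      fix b assume "b \<notin> occupied k (\<lambda>j. 1 - q j)"
      then show "T' b = undefined" using T(2) unfolding Phi_def by simp
    qed
  qed
next
  show "assignments k (\<lambda>j. 1 - q j) \<subseteq> Phi k q ` assignments k q"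
  proof
    fix T' assume T': "T' \<in> assignments k (\<lambda>j. 1 - q j)"
    define T where "T = (\<lambda>a. if a \<in> occupied k q then prod.swap (T' (1 - a)) else undefined)"
    have "T \<in> assignments k q"
      unfolding assignments_def
    proof (rule PiE_I)
      fix a assume a: "a \<in> occupied k q"
      then have "1 - a \<in> occupied k (\<lambda>j. 1 - q j)" unfolding occ_refl by auto
      then have "T' (1 - a) \<in> tb_pairs k (\<lambda>j. 1 - q j) (1 - a)" using T' unfolding assignments_def by auto
      then obtain p where "p \<in> tb_pairs k q a" "T' (1 - a) = prod.swap p" unfolding tb_refl by blast
      then show "T a \<in> tb_pairs k q a" using a unfolding T_def by simp
    next
      fix a assume "a \<notin> occupied k q" then show "T a = undefined" unfolding T_def by simp
    qed
    moreover have "Phi k q T = T'"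
    proof
      fix b
      show "Phi k q T b = T' b"
      proof (cases "b \<in> occupied k (\<lambda>j. 1 - q j)")
        case True
        then have "1 - b \<in> occupied k q" unfolding occ_refl by auto
        then show ?thesis using True unfolding Phi_def T_def by simp
      next
        case False
        have "T' b = undefined" using T' False unfolding assignments_def by (rule PiE_arb)
        then show ?thesis using False unfolding Phi_def by simp
      qed
    qed
    ultimately show "T' \<in> Phi k q ` assignments k q" by blast
  qed
qed

lemma vote_refl:
  assumes "T \<in> assignments k q"
  shows "vote_share k (\<lambda>j. 1 - q j) (Phi k q T) j = vote_share k q T j"
proof -
  have inj: "inj_on (\<lambda>a::real. 1 - a) (occupied k q)" by (rule inj_onI) simp
  have "vote_share k (\<lambda>j. 1 - q j) (Phi k q T) j =
     (\<Sum>a\<in>occupied k q. (if fst (Phi k q T (1 - a)) = j then left_part k (\<lambda>j. 1 - q j) (1 - a) else 0)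
                        + (if snd (Phi k q T (1 - a)) = j then right_part k (\<lambda>j. 1 - q j) (1 - a) else 0))"
    unfolding vote_share_def occ_refl using sum.reindex[OF inj] by (simp add: comp_def)
  also have "\<dots> = vote_share k q T j"
    unfolding vote_share_def left_refl right_refl
  proof (rule sum.cong)
    fix a assume "a \<in> occupied k q"
    then have "1 - a \<in> occupied k (\<lambda>j. 1 - q j)" unfolding occ_refl by auto
    then show "(if fst (Phi k q T (1 - a)) = j then right_part k q a else 0) +
          (if snd (Phi k q T (1 - a)) = j then left_part k q a else 0) =
          (if fst (T a) = j then left_part k q a else 0) + (if snd (T a) = j then right_part k q a else 0)"
      unfolding Phi_def by simp
  qed simp
  finally show ?thesis .
qed

lemma pw_refl:
  assumes "T \<in> assignments k q"
  shows "plurality_winners k (\<lambda>j. 1 - q j) (Phi k q T) = plurality_winners k q T"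
  unfolding plurality_winners_def vote_refl[OF assms] ..

lemma win_prob_refl: "win_prob k (\<lambda>j. 1 - q j) i = win_prob k q i"
proof -
  have c: "card (assignments k (\<lambda>j. 1 - q j)) = card (assignments k q)"
    using card_image[OF Phi_inj] Phi_image by metis
  have "(\<Sum>T\<in>assignments k (\<lambda>j. 1 - q j).
        (if i \<in> plurality_winners k (\<lambda>j. 1 - q j) T then 1 / real (card (plurality_winners k (\<lambda>j. 1 - q j) T)) else 0))
     = (\<Sum>T\<in>assignments k q.
        (if i \<in> plurality_winners k (\<lambda>j. 1 - q j) (Phi k q T) then 1 / real (card (plurality_winners k (\<lambda>j. 1 - q j) (Phi k q T))) else 0))"
    unfolding Phi_image[symmetric] using sum.reindex[OF Phi_inj] by (simp add: comp_def)
  also have "\<dots> = (\<Sum>T\<in>assignments k q.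
        (if i \<in> plurality_winners k q T then 1 / real (card (plurality_winners k q T)) else 0))"
    by (intro sum.cong refl) (simp add: pw_refl)
  finally show ?thesis unfolding win_prob_def c by simp
qed

lemma win_prob_cong:
  assumes "\<And>j. j < k \<Longrightarrow> q j = q' j"
  shows "win_prob k q i = win_prob k q' i"
proof -
  have o: "occupied k q = occupied k q'" unfolding occupied_def using assms by auto
  have C: "\<And>a. {j. j<k \<and> q j = a} = {j. j<k \<and> q' j = a}" using assms by auto
  have t: "tb_pairs k q = tb_pairs k q'" unfolding tb_pairs_def C ..
  have l: "left_part k q = left_part k q'" unfolding left_part_def o ..
  have r: "right_part k q = right_part k q'" unfolding right_part_def o ..
  have a: "assignments k q = assignments k q'" unfolding assignments_def o t ..
  have v: "vote_share k q = vote_share k q'" unfolding vote_share_def o l r ..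
  have p: "plurality_winners k q = plurality_winners k q'" unfolding plurality_winners_def v ..
  show ?thesis unfolding win_prob_def a p ..
qed



lemma tb_eq1: "{j. j<k \<and> q j = a} = C \<Longrightarrow> card C = 1 \<Longrightarrow> tb_pairs k q a = C \<times> C"
  unfolding tb_pairs_def Let_def by auto

lemma tb_eq2: "{j. j<k \<and> q j = a} = C \<Longrightarrow> card C \<noteq> 1 \<Longrightarrow> tb_pairs k q a = {(l,r). l\<in>C \<and> r\<in>C \<and> l\<noteq>r}"
  unfolding tb_pairs_def Let_def by auto

lemma left_nonneg:
  assumes "\<forall>b\<in>occupied k q. 0 \<le> b" "a \<in> occupied k q"
  shows "0 \<le> left_part k q a"
proof -
  define B where "B = {b \<in> occupied k q. b < a}"
  have fB: "finite B" unfolding B_def using finite_occ by auto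
  show ?thesis
  proof (cases "B = {}")
    case True then show ?thesis unfolding left_part_def Let_def B_def[symmetric] using assms by auto
  next
    case False
    then have "Max B \<in> B" using Max_in[OF fB] by auto
    then have "Max B < a" unfolding B_def by auto
    then show ?thesis unfolding left_part_def Let_def B_def[symmetric] using False by auto
  qed
qed

lemma right_nonneg:
  assumes "\<forall>b\<in>occupied k q. b \<le> 1" "a \<in> occupied k q"
  shows "0 \<le> right_part k q a"
proof -
  define B where "B = {b \<in> occupied k q. a < b}"
  have fB: "finite B" unfolding B_def using finite_occ by auto
  show ?thesis
  proof (cases "B = {}")
    case True then show ?thesis unfolding right_part_def Let_def B_def[symmetric] using assms by auto
  next
    case False
    then have "Min B \<in> B" using Min_in[OF fB] by auto
    then have "a < Min B" unfolding B_def by auto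
    then show ?thesis unfolding right_part_def Let_def B_def[symmetric] using False by auto
  qed
qed

lemma vote_ge_right:
  assumes "\<forall>b\<in>occupied k q. 0 \<le> b \<and> b \<le> 1" "a \<in> occupied k q" "snd (T a) = j"
  shows "right_part k q a \<le> vote_share k q T j"
proof -
  let ?f = "\<lambda>a. (if fst (T a) = j then left_part k q a else 0) + (if snd (T a) = j then right_part k q a else 0)"
  have nn: "\<And>b. b \<in> occupied k q \<Longrightarrow> 0 \<le> ?f b"
    using left_nonneg right_nonneg assms(1) by (simp add: add_nonneg_nonneg)
  have "right_part k q a \<le> ?f a" using assms left_nonneg[of k q a] by auto
  also have "\<dots> \<le> (\<Sum>b\<in>occupied k q. ?f b)"
    by (rule member_le_sum) (use assms nn finite_occ in auto)
  finally show ?thesis unfolding vote_share_def .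
qed

definition qA :: "nat \<Rightarrow> nat \<Rightarrow> real \<Rightarrow> real \<Rightarrow> nat \<Rightarrow> real" where
  "qA k i y z = (\<lambda>j. if j < k then (if j = i then y else z) else undefined)"

definition qB :: "nat \<Rightarrow> nat \<Rightarrow> nat \<Rightarrow> real \<Rightarrow> nat \<Rightarrow> real" where
  "qB k i j0 x = (\<lambda>j. if j < k then (if j = i \<or> j = j0 then x else 1 - x) else undefined)"

lemma card_offdiag: "card {(l,r). l \<in> C \<and> r \<in> C \<and> l \<noteq> r} = card C * (card C - 1)" if "finite C" for C :: "nat set"
proof -
  have "{(l,r). l \<in> C \<and> r \<in> C \<and> l \<noteq> r} = Sigma C (\<lambda>l. C - {l})" by auto
  then have "card {(l,r). l \<in> C \<and> r \<in> C \<and> l \<noteq> r} = (\<Sum>l\<in>C. card (C - {l}))"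
    using that by (simp add: card_SigmaI)
  also have "\<dots> = (\<Sum>l\<in>C. card C - 1)" using that by (intro sum.cong) auto
  finally show ?thesis by simp
qed

lemma L2:
  assumes "x < 1/2" "k \<ge> 2" "i < k" "0 \<le> x"
  shows "win_prob k (qA k i x x) i = 1 / real k"
proof -
  let ?q = "qA k i x x"
  have occ: "occupied k ?q = {x}" unfolding occupied_def qA_def using assms by auto
  have C: "{j. j<k \<and> ?q j = x} = {..<k}" unfolding qA_def by auto
  have tb: "tb_pairs k ?q x = {(l,r). l\<in>{..<k} \<and> r\<in>{..<k} \<and> l\<noteq>r}"
    by (rule tb_eq2[OF C]) (use assms in simp)
  have lp: "left_part k ?q x = x" unfolding left_part_def Let_def occ by simp
  have rp: "right_part k ?q x = 1 - x" unfolding right_part_def Let_def occ by simp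
  have A: "assignments k ?q = PiE {x} (tb_pairs k ?q)" unfolding assignments_def occ ..
  have pw: "plurality_winners k ?q T = {snd (T x)}" if T: "T \<in> assignments k ?q" for T
  proof -
    have Tx: "T x \<in> tb_pairs k ?q x" using T unfolding A by auto
    then have d: "fst (T x) \<noteq> snd (T x)" "snd (T x) < k" unfolding tb by auto
    have v: "vote_share k ?q T j = (if fst (T x) = j then x else 0) + (if snd (T x) = j then 1 - x else 0)" for j
      unfolding vote_share_def occ by (simp add: lp rp)
    have vs: "vote_share k ?q T (snd (T x)) = 1 - x" unfolding v using d by simp
    have vo: "vote_share k ?q T j \<le> x" if "j \<noteq> snd (T x)" for j unfolding v using that assms by simp
    have x1: "x < 1 - x" using assms by simp
    show ?thesis
    proof (rule set_eqI, rule iffI)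
      fix j assume "j \<in> plurality_winners k ?q T"
      then have "j < k" "vote_share k ?q T (snd (T x)) \<le> vote_share k ?q T j"
        unfolding plurality_winners_def using d by auto
      then show "j \<in> {snd (T x)}" using vs vo x1 by force
    next
      fix j assume "j \<in> {snd (T x)}"
      then have j: "j = snd (T x)" by simp
      have "vote_share k ?q T m \<le> vote_share k ?q T j" for m
        using vs vo[of m] x1 j by (cases "m = snd (T x)") auto
      then show "j \<in> plurality_winners k ?q T" unfolding plurality_winners_def using d j by auto
    qed
  qed
  have w: "win_prob k ?q i = real (card {T\<in>assignments k ?q. i \<in> plurality_winners k ?q T}) / (real 1 * real (card (assignments k ?q)))"
  proof (rule win_prob_filter)
    fix T assume "T \<in> assignments k ?q"
    from pw[OF this] show "card (plurality_winners k ?q T) = 1" by simp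
  qed
  have s1: "{T\<in>assignments k ?q. i \<in> plurality_winners k ?q T} = {T \<in> PiE {x} (tb_pairs k ?q). snd (T x) = i}"
    using pw unfolding A by auto
  have s2: "card {T \<in> PiE {x} (tb_pairs k ?q). snd (T x) = i} = card {p \<in> tb_pairs k ?q x. snd p = i}"
    using card_PiE_filter[of "{x}" x "tb_pairs k ?q" "\<lambda>p. snd p = i"] by simp
  have s3: "{p \<in> tb_pairs k ?q x. snd p = i} = ({..<k} - {i}) \<times> {i}" unfolding tb using assms by auto
  have s4: "card (({..<k} - {i}) \<times> {i}) = k - 1" using assms by (simp add: card_cartesian_product)
  have s5: "card (assignments k ?q) = card (tb_pairs k ?q x)" unfolding A by (simp add: card_PiE)
  have s6: "card (tb_pairs k ?q x) = k * (k - 1)" unfolding tb using card_offdiag[of "{..<k}"] by simp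
  have "win_prob k ?q i = real (k - 1) / real (k * (k - 1))"
    unfolding w s1 s2 s3 s4 s5 s6 by simp
  then show ?thesis using assms by (simp add: of_nat_diff)
qed


lemma parts2:
  assumes occ: "occupied k q = {x, 1 - x}" and x: "x < 1/2"
  shows "left_part k q x = x" "right_part k q x = (1 - 2*x)/2"
    "left_part k q (1-x) = (1 - 2*x)/2" "right_part k q (1-x) = x"
    "vote_share k q T j = (if fst (T x) = j then x else 0) + (if snd (T x) = j then (1 - 2*x)/2 else 0)
        + ((if fst (T (1-x)) = j then (1 - 2*x)/2 else 0) + (if snd (T (1-x)) = j then x else 0))"
proof -
  have b1: "{b \<in> occupied k q. b < x} = {}" using x unfolding occ by auto
  have b2: "{b \<in> occupied k q. x < b} = {1-x}" using x unfolding occ by auto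
  have b3: "{b \<in> occupied k q. b < 1-x} = {x}" using x unfolding occ by auto
  have b4: "{b \<in> occupied k q. 1-x < b} = {}" using x unfolding occ by auto
  show l1: "left_part k q x = x" unfolding left_part_def Let_def b1 by simp
  show r1: "right_part k q x = (1 - 2*x)/2" unfolding right_part_def Let_def b2 by simp
  show l2: "left_part k q (1-x) = (1 - 2*x)/2" unfolding left_part_def Let_def b3 by simp
  show r2: "right_part k q (1-x) = x" unfolding right_part_def Let_def b4 by simp
  have ne: "x \<noteq> 1 - x" using x by simp
  show "vote_share k q T j = (if fst (T x) = j then x else 0) + (if snd (T x) = j then (1 - 2*x)/2 else 0)
        + ((if fst (T (1-x)) = j then (1 - 2*x)/2 else 0) + (if snd (T (1-x)) = j then x else 0))"
    unfolding vote_share_def occ using ne by (simp add: l1 r1 l2 r2)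
qed

lemma L1:
  assumes "1/4 < x" "x < 1/2" "k \<ge> 4" "i < k"
  shows "win_prob k (qA k i x (1 - x)) i = 1"
proof -
  let ?q = "qA k i x (1 - x)"
  define D where "D = {..<k} - {i}"
  define j1 where "j1 = (if i = 0 then 1 else (0::nat))"
  have j1: "j1 < k" "j1 \<noteq> i" using assms by (auto simp: j1_def)
  have ne: "x \<noteq> 1 - x" using assms by simp
  have occ: "occupied k ?q = {x, 1 - x}"
  proof
    show "occupied k ?q \<subseteq> {x, 1 - x}" unfolding occupied_def qA_def by auto
    have "x \<in> occupied k ?q" unfolding occupied_def qA_def using assms by (auto intro!: image_eqI[of _ _ i])
    moreover have "1 - x \<in> occupied k ?q" unfolding occupied_def qA_def using j1 by (auto intro!: image_eqI[of _ _ j1])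
    ultimately show "{x, 1 - x} \<subseteq> occupied k ?q" by auto
  qed
  have Cx: "{j. j<k \<and> ?q j = x} = {i}" unfolding qA_def using assms ne by auto
  have C1: "{j. j<k \<and> ?q j = 1 - x} = D" unfolding qA_def D_def using assms ne by auto
  have cD: "card D = k - 1" unfolding D_def using assms by simp
  have tbx: "tb_pairs k ?q x = {i} \<times> {i}" by (rule tb_eq1[OF Cx]) simp
  have tb1: "tb_pairs k ?q (1-x) = {(l,r). l\<in>D \<and> r\<in>D \<and> l\<noteq>r}"
    by (rule tb_eq2[OF C1]) (use cD assms in simp)
  have pw: "plurality_winners k ?q T = {i}" if T: "T \<in> assignments k ?q" for T
  proof -
    have Tx: "T x = (i, i)" using T tbx unfolding assignments_def occ by auto
    have T1: "T (1-x) \<in> tb_pairs k ?q (1-x)" using T unfolding assignments_def occ by auto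
    then have d: "fst (T (1-x)) \<noteq> snd (T (1-x))" "fst (T (1-x)) \<noteq> i" "snd (T (1-x)) \<noteq> i"
      unfolding tb1 D_def by auto
    note v = parts2(5)[OF occ assms(2), of T]
    have vi: "vote_share k ?q T i = 1/2" unfolding v Tx using d by (simp add: field_simps)
    have vo: "vote_share k ?q T j \<le> x" if "j \<noteq> i" for j
      unfolding v Tx using that d assms by auto
    show ?thesis
    proof (rule set_eqI, rule iffI)
      fix j assume "j \<in> plurality_winners k ?q T"
      then have "vote_share k ?q T i \<le> vote_share k ?q T j"
        unfolding plurality_winners_def using assms by auto
      then show "j \<in> {i}" using vi vo[of j] assms by force
    next
      fix j assume "j \<in> {i}"
      then have j: "j = i" by simp
      have "vote_share k ?q T m \<le> vote_share k ?q T j" for m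
        using vi vo[of m] assms j by (cases "m = i") auto
      then show "j \<in> plurality_winners k ?q T" unfolding plurality_winners_def using j assms by auto
    qed
  qed
  have w: "win_prob k ?q i = real (card {T\<in>assignments k ?q. i \<in> plurality_winners k ?q T}) / (real 1 * real (card (assignments k ?q)))"
  proof (rule win_prob_filter)
    fix T assume "T \<in> assignments k ?q"
    from pw[OF this] show "card (plurality_winners k ?q T) = 1" by simp
  qed
  have "{T\<in>assignments k ?q. i \<in> plurality_winners k ?q T} = assignments k ?q" using pw by auto
  then show ?thesis unfolding w using card_assign_pos[of k ?q] by simp
qed

lemma L3:
  assumes "1/4 < x" "x < 1/2" "k \<ge> 4" "i < k" "j0 < k" "j0 \<noteq> i"
  shows "win_prob k (qB k i j0 x) i = 1/4"
proof -
  let ?q = "qB k i j0 x"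
  define D where "D = {..<k} - {i, j0}"
  have cD: "card D = k - 2" unfolding D_def using assms by (simp add: card_Diff_subset)
  have "card D > 0" using cD assms by simp
  then have "D \<noteq> {}" by auto
  then obtain j1 where j1: "j1 \<in> D" by auto
  have ne: "x \<noteq> 1 - x" using assms by simp
  have occ: "occupied k ?q = {x, 1 - x}"
  proof
    show "occupied k ?q \<subseteq> {x, 1 - x}" unfolding occupied_def qB_def by auto
    have "x \<in> occupied k ?q" unfolding occupied_def qB_def using assms by (auto intro!: image_eqI[of _ _ i])
    moreover have "1 - x \<in> occupied k ?q" unfolding occupied_def qB_def using j1 unfolding D_def by (auto intro!: image_eqI[of _ _ j1])
    ultimately show "{x, 1 - x} \<subseteq> occupied k ?q" by auto
  qed
  have Cx: "{j. j<k \<and> ?q j = x} = {i, j0}" unfolding qB_def using assms ne by auto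
  have C1: "{j. j<k \<and> ?q j = 1 - x} = D" unfolding qB_def D_def using assms ne by auto
  have tbx: "tb_pairs k ?q x = {(i, j0), (j0, i)}"
    using tb_eq2[OF Cx] assms by auto
  have tb1: "tb_pairs k ?q (1-x) = {(l,r). l\<in>D \<and> r\<in>D \<and> l\<noteq>r}"
    by (rule tb_eq2[OF C1]) (use cD assms in simp)
  have pw: "plurality_winners k ?q T = {fst (T x), snd (T (1-x))}" if T: "T \<in> assignments k ?q" for T
  proof -
    have Tx: "T x \<in> {(i, j0), (j0, i)}" using T tbx unfolding assignments_def occ by auto
    have T1: "T (1-x) \<in> tb_pairs k ?q (1-x)" using T unfolding assignments_def occ by auto
    then have d: "fst (T (1-x)) \<noteq> snd (T (1-x))" "fst (T (1-x)) \<notin> {i,j0}" "snd (T (1-x)) \<notin> {i,j0}"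
      "snd (T (1-x)) < k"
      unfolding tb1 D_def by auto
    have dx: "fst (T x) \<noteq> snd (T x)" "fst (T x) \<in> {i,j0}" "snd (T x) \<in> {i,j0}" using Tx assms by auto
    note v = parts2(5)[OF occ assms(2), of T]
    have v1: "vote_share k ?q T (fst (T x)) = x" unfolding v using d dx by auto
    have v2: "vote_share k ?q T (snd (T (1-x))) = x" unfolding v using d dx by auto
    have vo: "vote_share k ?q T j < x" if "j \<noteq> fst (T x)" "j \<noteq> snd (T (1-x))" for j
      unfolding v using that d dx assms by auto
    have ff: "fst (T x) < k" using dx assms by auto
    show ?thesis
    proof (rule set_eqI, rule iffI)
      fix j assume "j \<in> plurality_winners k ?q T"
      then have "vote_share k ?q T (fst (T x)) \<le> vote_share k ?q T j"
        unfolding plurality_winners_def using ff by auto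
      then show "j \<in> {fst (T x), snd (T (1-x))}" using v1 vo[of j] by force
    next
      fix j assume j: "j \<in> {fst (T x), snd (T (1-x))}"
      have "vote_share k ?q T m \<le> vote_share k ?q T j" for m
        using v1 v2 vo[of m] j by (cases "m = fst (T x) \<or> m = snd (T (1-x))") auto
      then show "j \<in> plurality_winners k ?q T" unfolding plurality_winners_def using j ff d by auto
    qed
  qed
  have w: "win_prob k ?q i = real (card {T\<in>assignments k ?q. i \<in> plurality_winners k ?q T}) / (real 2 * real (card (assignments k ?q)))"
  proof (rule win_prob_filter)
    fix T assume T: "T \<in> assignments k ?q"
    have "T x \<in> tb_pairs k ?q x" using T unfolding assignments_def occ by auto
    then have "fst (T x) \<in> {i,j0}" unfolding tbx by auto
    moreover have "T (1-x) \<in> tb_pairs k ?q (1-x)" using T unfolding assignments_def occ by auto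
    then have "snd (T (1-x)) \<in> D" unfolding tb1 by auto
    ultimately have "fst (T x) \<noteq> snd (T (1-x))" unfolding D_def by auto
    then show "card (plurality_winners k ?q T) = 2" using pw[OF T] by simp
  qed
  have A: "assignments k ?q = PiE {x, 1-x} (tb_pairs k ?q)" unfolding assignments_def occ ..
  have s1: "{T\<in>assignments k ?q. i \<in> plurality_winners k ?q T} = {T \<in> PiE {x, 1-x} (tb_pairs k ?q). fst (T x) = i}"
  proof -
    have "i \<in> plurality_winners k ?q T \<longleftrightarrow> fst (T x) = i" if T: "T \<in> assignments k ?q" for T
    proof -
      have "T (1-x) \<in> tb_pairs k ?q (1-x)" using T unfolding assignments_def occ by auto
      then have "snd (T (1-x)) \<in> D" unfolding tb1 by auto
      then show ?thesis unfolding pw[OF T] D_def by auto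
    qed
    then show ?thesis unfolding A by auto
  qed
  let ?N = "card (tb_pairs k ?q (1-x))"
  have s2: "card {T \<in> PiE {x, 1-x} (tb_pairs k ?q). fst (T x) = i} = card {p \<in> tb_pairs k ?q x. fst p = i} * ?N"
    using card_PiE_filter[of "{x, 1-x}" x "tb_pairs k ?q" "\<lambda>p. fst p = i"] ne by simp
  have s3: "{p \<in> tb_pairs k ?q x. fst p = i} = {(i, j0)}" unfolding tbx using assms by auto
  have s5: "card (assignments k ?q) = card (tb_pairs k ?q x) * ?N"
    unfolding A using card_PiE_split[of "{x, 1-x}" x "tb_pairs k ?q"] ne by simp
  have s6: "card (tb_pairs k ?q x) = 2" unfolding tbx using assms by simp
  have Npos: "?N > 0" using finite_tb tb_nonempty[of "1-x" k ?q] occ by (simp add: card_gt_0_iff)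
  show ?thesis unfolding w s1 s2 s3 s5 s6 using Npos by simp
qed



lemma Z:
  assumes x: "1/4 < x" "x < 1/2" and y: "0 \<le> y" "y \<le> 1/2" "y \<noteq> x" and i: "i < k"
   and q: "q i = y" "\<forall>j<k. j \<noteq> i \<longrightarrow> q j = x \<or> q j = 1-x"
   and j1: "j1<k" "j1\<noteq>i" "q j1 = x" and j2: "j2<k" "j2\<noteq>i" "q j2 = 1-x"
  shows "win_prob k q i = 0"
proof (rule win_prob_zero)
  fix T assume T: "T \<in> assignments k q"
  have ne1: "x \<noteq> 1 - x" "y \<noteq> 1 - x" using x y by auto
  have occ: "occupied k q = {x, 1 - x, y}"
  proof
    show "occupied k q \<subseteq> {x, 1 - x, y}" unfolding occupied_def using q by auto
    have "x \<in> occupied k q" unfolding occupied_def using j1 by (auto intro!: image_eqI[of _ _ j1])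
    moreover have "1 - x \<in> occupied k q" unfolding occupied_def using j2 by (auto intro!: image_eqI[of _ _ j2])
    moreover have "y \<in> occupied k q" unfolding occupied_def using i q by (auto intro!: image_eqI[of _ _ i])
    ultimately show "{x, 1 - x, y} \<subseteq> occupied k q" by auto
  qed
  have Cy: "{j. j<k \<and> q j = y} = {i}" using q i y ne1 by auto
  have tby: "tb_pairs k q y = {i} \<times> {i}" by (rule tb_eq1[OF Cy]) simp
  have Ty: "T y = (i, i)"
  proof -
    have "T y \<in> tb_pairs k q y" using T unfolding assignments_def occ by auto
    then show ?thesis unfolding tby by auto
  qed
  have comp: "fst (T a) \<noteq> i \<and> snd (T a) \<noteq> i \<and> snd (T a) < k" if a: "a \<in> {x, 1 - x}" for a
  proof -
    have "T a \<in> tb_pairs k q a" using T a unfolding assignments_def occ by auto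
    then have "T a \<in> {j. j<k \<and> q j = a} \<times> {j. j<k \<and> q j = a}" using tb_sub by blast
    then show ?thesis using a q y ne1 by auto
  qed
  have vi: "vote_share k q T i = left_part k q y + right_part k q y"
    unfolding vote_share_def occ using ne1 y comp[of x] comp[of "1-x"] Ty by simp
  have lt: "left_part k q y + right_part k q y < x"
  proof (cases "y < x")
    case True
    have b1: "{b \<in> occupied k q. b < y} = {}" using True x unfolding occ by auto
    have b2: "{b \<in> occupied k q. y < b} = {x, 1-x}" using True x unfolding occ by auto
    have m: "Min {x, 1-x} = x" using x by simp
    show ?thesis unfolding left_part_def right_part_def Let_def b1 b2 m using True by (simp add: field_simps)
  next
    case False
    then have yx: "x < y" using y by simp
    have b1: "{b \<in> occupied k q. b < y} = {x}" using yx x y unfolding occ by auto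
    have b2: "{b \<in> occupied k q. y < b} = {1-x}" using yx x y unfolding occ by auto
    show ?thesis unfolding left_part_def right_part_def Let_def b1 b2 using x by (simp add: field_simps)
  qed
  have b4: "{b \<in> occupied k q. 1-x < b} = {}" using x y unfolding occ by auto
  have r1: "right_part k q (1-x) = x" unfolding right_part_def Let_def b4 by simp
  define j' where "j' = snd (T (1-x))"
  have j'k: "j' < k" using comp[of "1-x"] unfolding j'_def by simp
  have bnd: "\<forall>b\<in>occupied k q. 0 \<le> b \<and> b \<le> 1" using x y unfolding occ by auto
  have "x \<le> vote_share k q T j'"
    using vote_ge_right[OF bnd, of "1-x" T j'] r1 unfolding occ j'_def by simp
  then show "i \<notin> plurality_winners k q T"
    unfolding plurality_winners_def using j'k vi lt by force
qed



lemma finite_OP: "finite (others_profiles k x i y)"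
  unfolding others_profiles_def by (intro finite_PiE) auto

lemma card_OP:
  assumes "x \<noteq> 1 - x" "i < k"
  shows "card (others_profiles k x i y) = 2 ^ (k - 1)"
proof -
  have "card (others_profiles k x i y) = (\<Prod>j\<in>{..<k}. card (if j = i then {y} else {x, 1 - x}))"
    unfolding others_profiles_def by (simp add: card_PiE)
  also have "\<dots> = card (if i = i then {y} else {x, 1 - x}) * (\<Prod>j\<in>{..<k}-{i}. card (if j = i then {y} else {x, 1 - x}))"
    using assms by (intro prod.remove) auto
  also have "(\<Prod>j\<in>{..<k}-{i}. card (if j = i then {y} else {x, 1 - x})) = (\<Prod>j\<in>{..<k}-{i}. 2)"
    using assms by (intro prod.cong) auto
  finally show ?thesis using assms by simp
qed

definition Rf :: "nat \<Rightarrow> (nat \<Rightarrow> real) \<Rightarrow> nat \<Rightarrow> real" where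
  "Rf k q = (\<lambda>j. if j < k then 1 - q j else undefined)"

lemma win_Rf: "win_prob k (Rf k q) i = win_prob k q i"
proof -
  have "win_prob k (Rf k q) i = win_prob k (\<lambda>j. 1 - q j) i"
    by (rule win_prob_cong) (simp add: Rf_def)
  then show ?thesis using win_prob_refl by simp
qed

lemma OP_mem: "q \<in> others_profiles k x i y \<longleftrightarrow>
   (\<forall>j<k. q j \<in> (if j = i then {y} else {x, 1 - x})) \<and> (\<forall>j. \<not> j < k \<longrightarrow> q j = undefined)"
  unfolding others_profiles_def PiE_iff extensional_def by auto

lemma Rf_inj: "inj_on (Rf k) (others_profiles k x i y)"
proof (rule inj_onI)
  fix q1 q2 assume q: "q1 \<in> others_profiles k x i y" "q2 \<in> others_profiles k x i y" "Rf k q1 = Rf k q2"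
  show "q1 = q2"
  proof
    fix j show "q1 j = q2 j"
    proof (cases "j < k")
      case True then show ?thesis using fun_cong[OF q(3), of j] unfolding Rf_def by simp
    next
      case False
      have "q1 j = undefined" "q2 j = undefined" using q(1,2) False unfolding OP_mem by blast+
      then show ?thesis by simp
    qed
  qed
qed

lemma Rf_mem:
  assumes q: "q \<in> others_profiles k x i y"
  shows "Rf k q \<in> others_profiles k x i (1 - y)"
  unfolding OP_mem
proof (intro conjI allI impI)
  fix j assume j: "j < k"
  have "q j \<in> (if j = i then {y} else {x, 1 - x})" using q j unfolding OP_mem by blast
  then show "Rf k q j \<in> (if j = i then {1 - y} else {x, 1 - x})"
    using j by (cases "j = i") (auto simp: Rf_def)
next
  fix j assume "\<not> j < k" then show "Rf k q j = undefined" by (simp add: Rf_def)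
qed

lemma Rf_Rf:
  assumes q: "q \<in> others_profiles k x i y"
  shows "Rf k (Rf k q) = q"
proof
  fix j show "Rf k (Rf k q) j = q j"
  proof (cases "j < k")
    case True then show ?thesis by (simp add: Rf_def)
  next
    case False
    have "q j = undefined" using q False unfolding OP_mem by blast
    then show ?thesis using False by (simp add: Rf_def)
  qed
qed

lemma Rf_image: "Rf k ` others_profiles k x i y = others_profiles k x i (1 - y)"
proof
  show "Rf k ` others_profiles k x i y \<subseteq> others_profiles k x i (1 - y)"
    using Rf_mem by blast
next
  show "others_profiles k x i (1 - y) \<subseteq> Rf k ` others_profiles k x i y"
  proof
    fix q' assume q': "q' \<in> others_profiles k x i (1 - y)"
    have "Rf k q' \<in> others_profiles k x i (1 - (1 - y))" by (rule Rf_mem[OF q'])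
    then have "Rf k q' \<in> others_profiles k x i y" by simp
    moreover have "Rf k (Rf k q') = q'" by (rule Rf_Rf[OF q'])
    ultimately show "q' \<in> Rf k ` others_profiles k x i y" by (metis image_eqI)
  qed
qed

lemma dev_refl: "dev_payoff k x i (1 - y) = dev_payoff k x i y"
proof -
  have c: "card (others_profiles k x i (1 - y)) = card (others_profiles k x i y)"
    using card_image[OF Rf_inj] Rf_image by metis
  have "(\<Sum>q\<in>others_profiles k x i (1 - y). win_prob k q i) = (\<Sum>q\<in>others_profiles k x i y. win_prob k (Rf k q) i)"
    unfolding Rf_image[symmetric] using sum.reindex[OF Rf_inj] by (simp add: comp_def)
  also have "\<dots> = (\<Sum>q\<in>others_profiles k x i y. win_prob k q i)" by (simp add: win_Rf)
  finally show ?thesis unfolding dev_payoff_def c by simp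
qed

lemma qA_mem:
  assumes "z \<in> {x, 1 - x}"
  shows "qA k i y z \<in> others_profiles k x i y"
  unfolding OP_mem using assms by (auto simp: qA_def)

lemma qB_mem:
  shows "qB k i j0 x \<in> others_profiles k x i x"
  unfolding OP_mem by (auto simp: qB_def)

lemma lower:
  assumes x: "1/4 < x" "x < 1/2" and k: "k \<ge> 4" and i: "i < k"
  shows "1 + 1 / real k + real (k - 1) / 4 \<le> (\<Sum>q\<in>others_profiles k x i x. win_prob k q i)"
proof -
  define D where "D = {..<k} - {i}"
  define Q where "Q = (\<lambda>j0. qB k i j0 x)"
  let ?q1 = "qA k i x (1 - x)" and ?q2 = "qA k i x x"
  have ne: "x \<noteq> 1 - x" using x by simp
  have cD: "card D = k - 1" unfolding D_def using i by simp
  define j1 where "j1 = (if i = 0 then 1 else (0::nat))"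
  have j1: "j1 < k" "j1 \<noteq> i" using k i by (auto simp: j1_def)
  have inj: "inj_on Q D"
  proof (rule inj_onI)
    fix a b assume ab: "a \<in> D" "b \<in> D" "Q a = Q b"
    show "a = b"
    proof (rule ccontr)
      assume "a \<noteq> b"
      then show False using fun_cong[OF ab(3), of a] ab ne unfolding D_def Q_def qB_def by auto
    qed
  qed
  have n12: "?q1 \<noteq> ?q2"
  proof
    assume "?q1 = ?q2"
    then have "?q1 j1 = ?q2 j1" by simp
    then show False using j1 ne by (simp add: qA_def)
  qed
  have n1B: "?q1 \<notin> Q ` D"
  proof
    assume "?q1 \<in> Q ` D"
    then obtain a where a: "a \<in> D" "?q1 = Q a" by auto
    then show False using fun_cong[OF a(2), of a] ne unfolding D_def qA_def Q_def qB_def by auto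
  qed
  have n2B: "?q2 \<notin> Q ` D"
  proof
    assume "?q2 \<in> Q ` D"
    then obtain a where a: "a \<in> D" "?q2 = Q a" by auto
    have "card ({..<k} - {i, a}) = k - 2" using a(1) i unfolding D_def by (simp add: card_Diff_subset)
    then have "card ({..<k} - {i, a}) > 0" using k by simp
    then obtain b where b: "b \<in> {..<k} - {i, a}" by (metis card.empty ex_in_conv less_irrefl)
    then show False using fun_cong[OF a(2), of b] ne unfolding qA_def Q_def qB_def by auto
  qed
  let ?S = "insert ?q1 (insert ?q2 (Q ` D))"
  have fD: "finite D" unfolding D_def by simp
  have "(\<Sum>q\<in>?S. win_prob k q i) = win_prob k ?q1 i + (win_prob k ?q2 i + (\<Sum>q\<in>Q ` D. win_prob k q i))"
    using n12 n1B n2B fD by simp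
  also have "(\<Sum>q\<in>Q ` D. win_prob k q i) = (\<Sum>j0\<in>D. win_prob k (Q j0) i)"
    using sum.reindex[OF inj] by (simp add: comp_def)
  also have "\<dots> = (\<Sum>j0\<in>D. 1/4)"
    unfolding Q_def by (intro sum.cong refl L3) (use x k i in \<open>auto simp: D_def\<close>)
  also have "win_prob k ?q1 i = 1" using L1 x k i by simp
  also have "win_prob k ?q2 i = 1 / real k" using L2[of x k i] x k i by simp
  finally have eq: "(\<Sum>q\<in>?S. win_prob k q i) = 1 + 1 / real k + real (k - 1) / 4"
    using cD by simp
  have sub: "?S \<subseteq> others_profiles k x i x"
    using qA_mem[of "1-x" x k i x] qA_mem[of x x k i x] qB_mem unfolding Q_def by auto
  have "(\<Sum>q\<in>?S. win_prob k q i) \<le> (\<Sum>q\<in>others_profiles k x i x. win_prob k q i)"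
    by (rule sum_mono2[OF finite_OP sub]) (simp add: win_prob_nonneg)
  then show ?thesis using eq by simp
qed

lemma upper:
  assumes x: "1/4 < x" "x < 1/2" and y: "0 \<le> y" "y \<le> 1/2" "y \<noteq> x" and i: "i < k"
  shows "(\<Sum>q\<in>others_profiles k x i y. win_prob k q i) \<le> 2"
proof -
  let ?qa = "qA k i y x" and ?qb = "qA k i y (1 - x)"
  have pt: "win_prob k q i \<le> (if q \<in> {?qa, ?qb} then 1 else 0)" if q: "q \<in> others_profiles k x i y" for q
  proof (cases "q \<in> {?qa, ?qb}")
    case True then show ?thesis using win_prob_le1 by simp
  next
    case False
    have qi: "q i = y" using q i unfolding OP_mem by auto
    have qo: "\<forall>j<k. j \<noteq> i \<longrightarrow> q j = x \<or> q j = 1-x" using q unfolding OP_mem by auto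
    have qu: "\<forall>j. \<not> j < k \<longrightarrow> q j = undefined" using q unfolding OP_mem by blast
    have e1: "\<exists>j1. j1<k \<and> j1\<noteq>i \<and> q j1 = x"
    proof (rule ccontr)
      assume nex: "\<not> ?thesis"
      have "q j = ?qb j" for j
      proof (cases "j < k")
        case True
        show ?thesis
        proof (cases "j = i")
          case True then show ?thesis using qi \<open>j < k\<close> by (simp add: qA_def)
        next
          case False then show ?thesis using qo nex \<open>j < k\<close> by (auto simp: qA_def)
        qed
      next
        case False then show ?thesis using qu by (simp add: qA_def)
      qed
      then have "q = ?qb" by (intro ext)
      then show False using False by simp
    qed
    have e2: "\<exists>j2. j2<k \<and> j2\<noteq>i \<and> q j2 = 1 - x"
    proof (rule ccontr)
      assume nex: "\<not> ?thesis"
      have "q j = ?qa j" for j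
      proof (cases "j < k")
        case True
        show ?thesis
        proof (cases "j = i")
          case True then show ?thesis using qi \<open>j < k\<close> by (simp add: qA_def)
        next
          case False then show ?thesis using qo nex \<open>j < k\<close> by (auto simp: qA_def)
        qed
      next
        case False then show ?thesis using qu by (simp add: qA_def)
      qed
      then have "q = ?qa" by (intro ext)
      then show False using False by simp
    qed
    from e1 e2 obtain j1 j2 where "j1<k" "j1\<noteq>i" "q j1 = x" "j2<k" "j2\<noteq>i" "q j2 = 1 - x" by blast
    then have "win_prob k q i = 0" using Z[OF x y i qi qo] by blast
    then show ?thesis using False by simp
  qed
  have "(\<Sum>q\<in>others_profiles k x i y. win_prob k q i)
      \<le> (\<Sum>q\<in>others_profiles k x i y. (if q \<in> {?qa, ?qb} then 1 else 0))"
    by (rule sum_mono) (rule pt)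
  also have "\<dots> = real (card {q \<in> others_profiles k x i y. q \<in> {?qa, ?qb}})"
    using finite_OP sum.inter_filter[of "others_profiles k x i y" "\<lambda>_. (1::real)" "\<lambda>q. q \<in> {?qa, ?qb}"]
    by simp
  also have "card {q \<in> others_profiles k x i y. q \<in> {?qa, ?qb}} \<le> card {?qa, ?qb}"
    by (rule card_mono) auto
  also have "card {?qa, ?qb} \<le> 2" by (rule card_insert_le_m1) auto
  finally show ?thesis by simp
qed



lemma arith_k: "(k::nat) \<ge> 4 \<Longrightarrow> 2 \<le> 1 + 1 / real k + real (k - 1) / 4"
proof -
  assume k: "k \<ge> 4"
  show ?thesis
  proof (cases "k = 4")
    case True then show ?thesis by simp
  next
    case False
    then have "real k \<ge> 5" using k by simp
    moreover have "real (k - 1) = real k - 1" using k by (simp add: of_nat_diff)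
    moreover have "0 \<le> 1 / real k" by simp
    ultimately show ?thesis by linarith
  qed
qed

theorem mainTheorem19:
  fixes k i :: nat and x :: real and M :: "real measure"
  assumes "k \<ge> 4" and "1/4 < x" and "x < 1/2" and "i < k"
    and "prob_space M" and "sets M = sets borel" and "emeasure M {0..1} = 1"
  shows "(\<forall>y\<in>{0..1}. dev_payoff k x i y \<le> (dev_payoff k x i x + dev_payoff k x i (1 - x)) / 2)
       \<and> (\<integral>y. dev_payoff k x i y \<partial>M) \<le> (dev_payoff k x i x + dev_payoff k x i (1 - x)) / 2"
proof -
  note k = assms(1) and x = assms(2,3) and i = assms(4)
  have ne: "x \<noteq> 1 - x" using x by simp
  define P where "P = dev_payoff k x i x"
  have P1: "dev_payoff k x i (1 - x) = P" unfolding P_def by (rule dev_refl)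
  have cOP: "\<And>y. real (card (others_profiles k x i y)) = 2 ^ (k - 1)"
    using card_OP[OF ne i] by simp
  have pos: "(0::real) < 2 ^ (k - 1)" by simp
  have Plow: "2 / 2 ^ (k - 1) \<le> P"
  proof -
    have "2 \<le> (\<Sum>q\<in>others_profiles k x i x. win_prob k q i)"
      using lower[OF x k i] arith_k[OF k] by linarith
    then show ?thesis unfolding P_def dev_payoff_def cOP using pos by (simp add: divide_right_mono)
  qed
  have bound: "\<forall>y\<in>{0..1}. dev_payoff k x i y \<le> P"
  proof
    fix y :: real assume y: "y \<in> {0..1}"
    define y' where "y' = (if y \<le> 1/2 then y else 1 - y)"
    have dy: "dev_payoff k x i y = dev_payoff k x i y'"
      unfolding y'_def using dev_refl[of k x i "1 - y"] by simp
    have y': "0 \<le> y'" "y' \<le> 1/2" using y unfolding y'_def by auto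
    show "dev_payoff k x i y \<le> P"
    proof (cases "y' = x")
      case True then show ?thesis unfolding dy P_def by simp
    next
      case False
      have "dev_payoff k x i y' \<le> 2 / 2 ^ (k - 1)"
        unfolding dev_payoff_def cOP using upper[OF x y' False i] pos by (simp add: divide_right_mono)
      then show ?thesis unfolding dy using Plow by linarith
    qed
  qed
  have rhs: "(dev_payoff k x i x + dev_payoff k x i (1 - x)) / 2 = P" unfolding P1 P_def by simp
  interpret prob_space M by fact
  have pr: "prob {0..1} = 1" using assms(7) by (simp add: emeasure_eq_measure)
  have AE: "AE y in M. y \<in> {0..1}" by (rule AE_prob_1[OF pr])
  have P0: "0 \<le> P" using Plow pos by (smt (verit) divide_nonneg_pos)
  have "(\<integral>y. dev_payoff k x i y \<partial>M) \<le> (\<integral>y. P \<partial>M)"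
  proof (rule integral_mono_AE')
    show "integrable M (\<lambda>y. P)" by simp
    show "AE y in M. dev_payoff k x i y \<le> P" using AE bound by auto
    show "AE y in M. 0 \<le> P" using P0 by simp
  qed
  also have "(\<integral>y. P \<partial>M) = P" by (simp add: prob_space)
  finally show ?thesis unfolding rhs using bound by simp
qed


end
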